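(* Let $(X,\|\cdot\|_X)$ be a Banach space and $\mathcal{K}\subset X$. If there exists $\gamma>0$ such that $\lim_{n\to\infty}d_n^\gamma(\mathcal{K})_X=0$, then $\mathcal{K}$ is totally bounded (i.e. its closure is compact).
   Context: $\mathcal{K}$ is totally bounded if for every $\varepsilon>0$ it is covered by finitely many closed balls of radius $\varepsilon$. For $k\ge1$ and a norm $\|\cdot\|_{Y_k}$ on $\mathbb{R}^k$ let $B_{Y_k}=\{y\in\mathbb{R}^k:\|y\|_{Y_k}\le1\}$. For $\gamma\ge0$, the fixed Lipschitz width is $d^\gamma(\mathcal{K},Y_k)_X=\inf_{\Phi}\sup_{f\in\mathcal{K}}\inf_{y\in B_{Y_k}}\|f-\Phi(y)\|_X\in[0,\infty]$, the infimum being over all maps $\Phi:B_{Y_k}\to X$ with $\|\Phi(y)-\Phi(y')\|_X\le\gamma\|y-y'\|_{Y_k}$ for all $y,y'\in B_{Y_k}$. The Lipschitz width is $d_n^\gamma(\mathcal{K})_X=\inf_{1\le k\le n}\inf_{\|\cdot\|_{Y_k}}d^\gamma(\mathcal{K},Y_k)_X$, where the inner infimum is over all norms on $\mathbb{R}^k$. *)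

theory Defs
  imports "HOL-Analysis.Analysis" "HOL-Library.Extended_Nonnegative_Real"
begin

text \<open>R^k is represented by the real vectors indexed by nat that vanish outside {..<k}.\<close>
definition Rk :: "nat \<Rightarrow> (nat \<Rightarrow> real) set" where
  "Rk k = {y. \<forall>i\<ge>k. y i = 0}"

definition is_norm_on :: "nat \<Rightarrow> ((nat \<Rightarrow> real) \<Rightarrow> real) \<Rightarrow> bool" where
  "is_norm_on k N \<longleftrightarrow>
     (\<forall>y\<in>Rk k. N y \<ge> 0) \<and>
     (\<forall>y\<in>Rk k. N y = 0 \<longleftrightarrow> (\<forall>i. y i = 0)) \<and>
     (\<forall>y\<in>Rk k. \<forall>c::real. N (\<lambda>i. c * y i) = \<bar>c\<bar> * N y) \<and>
     (\<forall>y\<in>Rk k. \<forall>z\<in>Rk k. N (\<lambda>i. y i + z i) \<le> N y + N z)"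

definition unit_ball :: "nat \<Rightarrow> ((nat \<Rightarrow> real) \<Rightarrow> real) \<Rightarrow> (nat \<Rightarrow> real) set" where
  "unit_ball k N = {y \<in> Rk k. N y \<le> 1}"

definition lipschitz_on_ball ::
  "real \<Rightarrow> nat \<Rightarrow> ((nat \<Rightarrow> real) \<Rightarrow> real) \<Rightarrow> ((nat \<Rightarrow> real) \<Rightarrow> 'a::metric_space) \<Rightarrow> bool" where
  "lipschitz_on_ball \<gamma> k N \<Phi> \<longleftrightarrow>
     (\<forall>y\<in>unit_ball k N. \<forall>y'\<in>unit_ball k N. dist (\<Phi> y) (\<Phi> y') \<le> \<gamma> * N (\<lambda>i. y i - y' i))"

definition fixed_lipschitz_width ::
  "real \<Rightarrow> 'a::real_normed_vector set \<Rightarrow> nat \<Rightarrow> ((nat \<Rightarrow> real) \<Rightarrow> real) \<Rightarrow> ennreal" where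
  "fixed_lipschitz_width \<gamma> K k N =
     (INF \<Phi> \<in> {\<Phi>. lipschitz_on_ball \<gamma> k N \<Phi>}.
        SUP f \<in> K. INF y \<in> unit_ball k N. ennreal (norm (f - \<Phi> y)))"

definition lipschitz_width :: "real \<Rightarrow> 'a::real_normed_vector set \<Rightarrow> nat \<Rightarrow> ennreal" where
  "lipschitz_width \<gamma> K n =
     (INF k \<in> {1..n}. INF N \<in> {N. is_norm_on k N}. fixed_lipschitz_width \<gamma> K k N)"

end

theory Submission
  imports Defs
begin

definition ev :: "nat \<Rightarrow> nat \<Rightarrow> real" where "ev i = (\<lambda>j. if j = i then 1 else 0)"

lemma norm_zero:
  assumes "is_norm_on k N" shows "N (\<lambda>i. 0) = 0"
  using assms unfolding is_norm_on_def Rk_def by auto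

lemma norm_scale:
  assumes "is_norm_on k N" "y \<in> Rk k" shows "N (\<lambda>i. c * y i) = \<bar>c\<bar> * N y"
  using assms unfolding is_norm_on_def by auto

lemma norm_add:
  assumes "is_norm_on k N" "y \<in> Rk k" "z \<in> Rk k" shows "N (\<lambda>i. y i + z i) \<le> N y + N z"
  using assms unfolding is_norm_on_def by auto

lemma norm_nonneg':
  assumes "is_norm_on k N" "y \<in> Rk k" shows "N y \<ge> 0"
  using assms unfolding is_norm_on_def by auto

lemma norm_rev_tri:
  assumes N: "is_norm_on k N" and y: "y \<in> Rk k" and z: "z \<in> Rk k"
  shows "\<bar>N y - N z\<bar> \<le> N (\<lambda>i. y i - z i)"
proof -
  have d1: "(\<lambda>i. y i - z i) \<in> Rk k" "(\<lambda>i. z i - y i) \<in> Rk k" using y z by (auto simp: Rk_def)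
  have "N y = N (\<lambda>i. z i + (y i - z i))" by simp
  also have "\<dots> \<le> N z + N (\<lambda>i. y i - z i)" using norm_add[OF N z d1(1)] by simp
  finally have 1: "N y \<le> N z + N (\<lambda>i. y i - z i)" .
  have "N z = N (\<lambda>i. y i + (z i - y i))" by simp
  also have "\<dots> \<le> N y + N (\<lambda>i. z i - y i)" using norm_add[OF N y d1(2)] by simp
  also have "N (\<lambda>i. z i - y i) = N (\<lambda>i. (-1) * (y i - z i))" by simp
  also have "\<dots> = N (\<lambda>i. y i - z i)" using norm_scale[OF N d1(1), of "-1"] by simp
  finally have 2: "N z \<le> N y + N (\<lambda>i. y i - z i)" .
  show ?thesis using 1 2 by linarith
qed

lemma norm_upper:
  assumes N: "is_norm_on k N" and w: "w \<in> Rk k"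
  shows "N w \<le> (\<Sum>i<k. \<bar>w i\<bar> * N (ev i))"
proof -
  have "\<forall>w. (\<forall>i\<ge>m. w i = 0) \<longrightarrow> m \<le> k \<longrightarrow> N w \<le> (\<Sum>i<m. \<bar>w i\<bar> * N (ev i))" for m
  proof (induction m)
    case 0
    show ?case
    proof (intro allI impI)
      fix w :: "nat \<Rightarrow> real" assume "\<forall>i\<ge>0. w i = 0"
      then have "w = (\<lambda>i. 0)" by auto
      then show "N w \<le> (\<Sum>i<0. \<bar>w i\<bar> * N (ev i))" using norm_zero[OF N] by simp
    qed
  next
    case (Suc m)
    show ?case
    proof (intro allI impI)
      fix w :: "nat \<Rightarrow> real" assume w: "\<forall>i\<ge>Suc m. w i = 0" and mk: "Suc m \<le> k"
      define w' where "w' = w(m := 0)"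
      have w'0: "\<forall>i\<ge>m. w' i = 0" using w by (auto simp: w'_def)
      have w'R: "w' \<in> Rk k" using w'0 mk by (auto simp: Rk_def)
      have eR: "ev m \<in> Rk k" using mk by (auto simp: Rk_def ev_def)
      have emR: "(\<lambda>i. w m * ev m i) \<in> Rk k" using mk by (auto simp: Rk_def ev_def)
      have eq: "w = (\<lambda>i. w' i + w m * ev m i)" by (auto simp: w'_def ev_def)
      have "N w \<le> N w' + N (\<lambda>i. w m * ev m i)"
        using norm_add[OF N w'R emR] eq by simp
      also have "N (\<lambda>i. w m * ev m i) = \<bar>w m\<bar> * N (ev m)" using norm_scale[OF N eR] by simp
      also have "N w' \<le> (\<Sum>i<m. \<bar>w' i\<bar> * N (ev i))" using Suc.IH w'0 mk by auto
      also have "(\<Sum>i<m. \<bar>w' i\<bar> * N (ev i)) = (\<Sum>i<m. \<bar>w i\<bar> * N (ev i))"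
        by (rule sum.cong) (auto simp: w'_def)
      finally show "N w \<le> (\<Sum>i<Suc m. \<bar>w i\<bar> * N (ev i))" by simp
    qed
  qed
  then show ?thesis using w by (auto simp: Rk_def)
qed

lemma coord_tendsto: "((\<lambda>y::nat\<Rightarrow>real. y i) \<longlongrightarrow> z i) (at z within S)"
proof -
  have "isCont (\<lambda>y::nat\<Rightarrow>real. y i) z"
    using continuous_on_product_coordinates[of i] continuous_on_eq_continuous_at[OF open_UNIV] by blast
  then show ?thesis
    by (metis continuous_at_imp_continuous_at_within continuous_within)
qed

lemma h_tendsto: "((\<lambda>y::nat\<Rightarrow>real. \<Sum>i<k. \<bar>y i - z i\<bar> * C i) \<longlongrightarrow> 0) (at z within S)"
proof -
  have "((\<lambda>y::nat\<Rightarrow>real. \<Sum>i<k. \<bar>y i - z i\<bar> * C i) \<longlongrightarrow> (\<Sum>i<k. \<bar>z i - z i\<bar> * C i)) (at z within S)"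
    by (intro tendsto_intros coord_tendsto)
  then show ?thesis by simp
qed

lemma norm_cont:
  assumes N: "is_norm_on k N" shows "continuous_on (Rk k) N"
  unfolding continuous_on_def
proof
  fix z assume z: "z \<in> Rk k"
  have "((\<lambda>y. N y - N z) \<longlongrightarrow> 0) (at z within Rk k)"
  proof (rule Lim_null_comparison)
    show "eventually (\<lambda>y. norm (N y - N z) \<le> (\<Sum>i<k. \<bar>y i - z i\<bar> * N (ev i))) (at z within Rk k)"
      unfolding eventually_at_filter
    proof (rule always_eventually, intro allI impI)
      fix y assume y: "y \<in> Rk k"
      have d: "(\<lambda>i. y i - z i) \<in> Rk k" using y z by (auto simp: Rk_def)
      show "norm (N y - N z) \<le> (\<Sum>i<k. \<bar>y i - z i\<bar> * N (ev i))"
        using norm_rev_tri[OF N y z] norm_upper[OF N d] by simp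
    qed
    show "((\<lambda>y. \<Sum>i<k. \<bar>y i - z i\<bar> * N (ev i)) \<longlongrightarrow> 0) (at z within Rk k)"
      by (rule h_tendsto)
  qed
  then show "(N \<longlongrightarrow> N z) (at z within Rk k)" by (rule LIM_zero_cancel)
qed

lemma ball_sub: "unit_ball k N \<subseteq> Rk k" by (auto simp: unit_ball_def)

lemma phi_cont:
  fixes \<Phi> :: "(nat \<Rightarrow> real) \<Rightarrow> 'a::real_normed_vector"
  assumes N: "is_norm_on k N" and L: "lipschitz_on_ball \<gamma> k N \<Phi>" and g: "\<gamma> > 0"
  shows "continuous_on (unit_ball k N) \<Phi>"
  unfolding continuous_on_def
proof
  fix z assume z: "z \<in> unit_ball k N"
  have zR: "z \<in> Rk k" using z by (auto simp: unit_ball_def)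
  have "((\<lambda>y. \<Phi> y - \<Phi> z) \<longlongrightarrow> 0) (at z within unit_ball k N)"
  proof (rule Lim_null_comparison)
    show "eventually (\<lambda>y. norm (\<Phi> y - \<Phi> z) \<le> \<gamma> * (\<Sum>i<k. \<bar>y i - z i\<bar> * N (ev i))) (at z within unit_ball k N)"
      unfolding eventually_at_filter
    proof (rule always_eventually, intro allI impI)
      fix y assume y: "y \<in> unit_ball k N"
      have yR: "y \<in> Rk k" using y by (auto simp: unit_ball_def)
      have d: "(\<lambda>i. y i - z i) \<in> Rk k" using yR zR by (auto simp: Rk_def)
      have "norm (\<Phi> y - \<Phi> z) = dist (\<Phi> y) (\<Phi> z)" by (simp add: dist_norm)
      also have "\<dots> \<le> \<gamma> * N (\<lambda>i. y i - z i)" using L y z by (auto simp: lipschitz_on_ball_def)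
      also have "\<dots> \<le> \<gamma> * (\<Sum>i<k. \<bar>y i - z i\<bar> * N (ev i))"
        using norm_upper[OF N d] g by simp
      finally show "norm (\<Phi> y - \<Phi> z) \<le> \<gamma> * (\<Sum>i<k. \<bar>y i - z i\<bar> * N (ev i))" .
    qed
    show "((\<lambda>y. \<gamma> * (\<Sum>i<k. \<bar>y i - z i\<bar> * N (ev i))) \<longlongrightarrow> 0) (at z within unit_ball k N)"
      by (rule tendsto_mult_right_zero[OF h_tendsto])
  qed
  then show "(\<Phi> \<longlongrightarrow> \<Phi> z) (at z within unit_ball k N)" by (rule LIM_zero_cancel)
qed

definition Box :: "nat \<Rightarrow> real \<Rightarrow> (nat \<Rightarrow> real) set" where
  "Box k R = Pi\<^sub>E UNIV (\<lambda>i. if i < k then {-R..R} else {0})"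

lemma Box_compact: "compact (Box k R)"
proof -
  have "compactin (product_topology (\<lambda>i. euclidean) UNIV) (Box k R)"
    unfolding Box_def compactin_PiE by auto
  then show ?thesis by (simp add: euclidean_product_topology)
qed

lemma Box_iff: "y \<in> Box k R \<longleftrightarrow> y \<in> Rk k \<and> (\<forall>i<k. \<bar>y i\<bar> \<le> R)"
proof
  assume "y \<in> Box k R"
  then have h: "\<And>i. y i \<in> (if i < k then {-R..R} else {0})" unfolding Box_def PiE_UNIV_domain Pi_iff by blast
  have "\<forall>i<k. \<bar>y i\<bar> \<le> R"
  proof (intro allI impI)
    fix i assume "i < k" then show "\<bar>y i\<bar> \<le> R" using h[of i] by auto
  qed
  moreover have "y \<in> Rk k" unfolding Rk_def
  proof (intro CollectI allI impI)
    fix i assume "k \<le> i" then show "y i = 0" using h[of i] by auto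
  qed
  ultimately show "y \<in> Rk k \<and> (\<forall>i<k. \<bar>y i\<bar> \<le> R)" by blast
next
  assume "y \<in> Rk k \<and> (\<forall>i<k. \<bar>y i\<bar> \<le> R)"
  then show "y \<in> Box k R" unfolding Box_def PiE_UNIV_domain Rk_def Pi_iff by (auto simp: abs_le_iff)
qed

lemma norm_lower:
  assumes N: "is_norm_on k N" and k: "k \<ge> 1"
  shows "\<exists>c>0. \<forall>y\<in>Rk k. \<forall>i<k. c * \<bar>y i\<bar> \<le> N y"
proof -
  define Sph where "Sph = Box k 1 \<inter> (\<Union>i\<in>{..<k}. (\<lambda>y::nat\<Rightarrow>real. y i) -` {-1,1})"
  have cl: "closed ((\<lambda>y::nat\<Rightarrow>real. y i) -` {-1,1})" for i
    using continuous_closed_preimage[of UNIV "\<lambda>y::nat\<Rightarrow>real. y i" "{-1,1}"] by simp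
  have "closed (\<Union>i\<in>{..<k}. (\<lambda>y::nat\<Rightarrow>real. y i) -` {-1,1})"
    using cl by (intro closed_UN) auto
  then have cS: "compact Sph" unfolding Sph_def using Box_compact by blast
  have SR: "Sph \<subseteq> Rk k" unfolding Sph_def using Box_iff by blast
  have "ev 0 \<in> Box k 1" using k unfolding Box_iff by (auto simp: Rk_def ev_def)
  moreover have "ev 0 \<in> (\<Union>i\<in>{..<k}. (\<lambda>y::nat\<Rightarrow>real. y i) -` {-1,1})" using k by (auto simp: ev_def)
  ultimately have e0: "ev 0 \<in> Sph" unfolding Sph_def by blast
  have "continuous_on Sph N" using norm_cont[OF N] SR continuous_on_subset by blast
  then obtain x0 where x0: "x0 \<in> Sph" "\<And>y. y \<in> Sph \<Longrightarrow> N x0 \<le> N y"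
    using continuous_attains_inf[OF cS _] e0 by blast
  have "N x0 \<noteq> 0"
  proof
    assume "N x0 = 0"
    then have "\<forall>i. x0 i = 0" using N x0(1) SR unfolding is_norm_on_def by blast
    then show False using x0(1) unfolding Sph_def by auto
  qed
  moreover have "N x0 \<ge> 0" using norm_nonneg'[OF N] x0(1) SR by blast
  ultimately have c0: "N x0 > 0" by simp
  have "\<forall>y\<in>Rk k. \<forall>i<k. N x0 * \<bar>y i\<bar> \<le> N y"
  proof (intro ballI allI impI)
    fix y i assume y: "y \<in> Rk k" and i: "i < k"
    define m where "m = Max ((\<lambda>j. \<bar>y j\<bar>) ` {..<k})"
    have "0 \<in> {..<k}" using k by simp
    then have fin: "finite ((\<lambda>j. \<bar>y j\<bar>) ` {..<k})" "(\<lambda>j. \<bar>y j\<bar>) ` {..<k} \<noteq> {}" by auto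
    have yim: "\<bar>y i\<bar> \<le> m" unfolding m_def using fin i by (intro Max_ge) auto
    obtain j0 where j0: "j0 < k" "\<bar>y j0\<bar> = m" using Max_in[OF fin] unfolding m_def by auto
    show "N x0 * \<bar>y i\<bar> \<le> N y"
    proof (cases "m = 0")
      case True
      then show ?thesis using yim norm_nonneg'[OF N y] by simp
    next
      case False
      then have m0: "m > 0" using yim by simp
      define y' where "y' = (\<lambda>j. (1/m) * y j)"
      have "y' \<in> Sph" unfolding Sph_def
      proof (intro IntI)
        have "y' \<in> Rk k" using y by (auto simp: Rk_def y'_def)
        moreover have "\<forall>i<k. \<bar>y' i\<bar> \<le> 1"
        proof (intro allI impI)
          fix j assume "j < k"
          then have "\<bar>y j\<bar> \<le> m" unfolding m_def using fin by (intro Max_ge) auto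
          then show "\<bar>y' j\<bar> \<le> 1" using m0 by (simp add: y'_def abs_mult)
        qed
        ultimately show "y' \<in> Box k 1" using Box_iff by blast
        have "\<bar>y' j0\<bar> = 1" using j0 m0 by (simp add: y'_def abs_mult)
        then have "y' j0 \<in> {-1,1}" by (auto simp: abs_if split: if_splits)
        then show "y' \<in> (\<Union>i\<in>{..<k}. (\<lambda>y::nat\<Rightarrow>real. y i) -` {-1,1})" using j0 by blast
      qed
      then have "N x0 \<le> N y'" using x0 by blast
      also have "N y' = (1/m) * N y" unfolding y'_def using norm_scale[OF N y, of "1/m"] m0 by simp
      finally have "N x0 * m \<le> N y" using m0 by (simp add: field_simps)
      moreover have "N x0 * \<bar>y i\<bar> \<le> N x0 * m" using yim c0 by simp
      ultimately show ?thesis by linarith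
    qed
  qed
  then show ?thesis using c0 by blast
qed

lemma ball_compact:
  assumes N: "is_norm_on k N" and k: "k \<ge> 1"
  shows "compact (unit_ball k N)"
proof -
  obtain c where c: "c > 0" "\<forall>y\<in>Rk k. \<forall>i<k. c * \<bar>y i\<bar> \<le> N y" using norm_lower[OF N k] by blast
  have sub: "unit_ball k N \<subseteq> Box k (1/c)"
  proof
    fix y assume y: "y \<in> unit_ball k N"
    then have yR: "y \<in> Rk k" and y1: "N y \<le> 1" by (auto simp: unit_ball_def)
    have "\<forall>i<k. \<bar>y i\<bar> \<le> 1/c"
    proof (intro allI impI)
      fix i assume "i < k"
      then have "c * \<bar>y i\<bar> \<le> 1" using c yR y1 by force
      then show "\<bar>y i\<bar> \<le> 1/c" using c by (simp add: field_simps)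
    qed
    then show "y \<in> Box k (1/c)" using yR Box_iff by blast
  qed
  have BR: "Box k (1/c) \<subseteq> Rk k" using Box_iff by blast
  have "continuous_on (Box k (1/c)) N" using norm_cont[OF N] BR continuous_on_subset by blast
  then have cl: "closed (Box k (1/c) \<inter> N -` {..1})"
    using continuous_closed_preimage Box_compact compact_imp_closed closed_atMost by blast
  have eq: "unit_ball k N = Box k (1/c) \<inter> (Box k (1/c) \<inter> N -` {..1})"
    using sub BR by (auto simp: unit_ball_def)
  show ?thesis unfolding eq using Box_compact cl by blast
qed

theorem lemma2p9:
  fixes K :: "'a::banach set"
  assumes "\<exists>\<gamma>>0. (\<lambda>n. lipschitz_width \<gamma> K n) \<longlonglongrightarrow> 0"
  shows "totally_bounded K"
proof -
  obtain \<gamma> where g: "\<gamma> > 0" and lim: "(\<lambda>n. lipschitz_width \<gamma> K n) \<longlonglongrightarrow> 0" using assms by blast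
  show ?thesis unfolding totally_bounded_metric
  proof (intro allI impI)
    fix e :: real assume e: "e > 0"
    have "eventually (\<lambda>n. lipschitz_width \<gamma> K n < ennreal (e/2)) sequentially"
      using order_tendstoD(2)[OF lim] e by simp
    then obtain n where n: "lipschitz_width \<gamma> K n < ennreal (e/2)"
      using eventually_sequentially by auto
    then obtain k where k: "k \<in> {1..n}"
      and "(INF N \<in> {N. is_norm_on k N}. fixed_lipschitz_width \<gamma> K k N) < ennreal (e/2)"
      unfolding lipschitz_width_def by (simp only: INF_less_iff) blast
    then obtain N where N: "is_norm_on k N" and "fixed_lipschitz_width \<gamma> K k N < ennreal (e/2)"
      by (auto simp: INF_less_iff)
    then obtain \<Phi> :: "(nat \<Rightarrow> real) \<Rightarrow> 'a" where L: "lipschitz_on_ball \<gamma> k N \<Phi>"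
      and sup: "(SUP f \<in> K. INF y \<in> unit_ball k N. ennreal (norm (f - \<Phi> y))) < ennreal (e/2)"
      unfolding fixed_lipschitz_width_def by (auto simp: INF_less_iff)
    have close: "\<exists>y\<in>unit_ball k N. norm (f - \<Phi> y) < e/2" if f: "f \<in> K" for f
    proof -
      have "(INF y \<in> unit_ball k N. ennreal (norm (f - \<Phi> y))) < ennreal (e/2)"
        using sup f by (meson SUP_upper le_less_trans)
      then obtain y where "y \<in> unit_ball k N" "ennreal (norm (f - \<Phi> y)) < ennreal (e/2)"
        by (auto simp: INF_less_iff)
      then show ?thesis by (auto simp: ennreal_less_iff)
    qed
    have "compact (\<Phi> ` unit_ball k N)"
      using compact_continuous_image[OF phi_cont[OF N L g] ball_compact[OF N]] k by auto
    then obtain F where F0: "finite F" "\<Phi> ` unit_ball k N \<subseteq> (\<Union>x\<in>F. ball x (e/2))"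
      unfolding compact_eq_totally_bounded using e by (meson half_gt_zero)
    then have F: "finite F" "\<Phi> ` unit_ball k N \<subseteq> (\<Union>x\<in>F. {y. dist x y < e/2})"
      by (auto simp: ball_def)
    have "K \<subseteq> (\<Union>x\<in>F. {y. dist x y < e})"
    proof
      fix f assume "f \<in> K"
      then obtain y where y: "y \<in> unit_ball k N" "norm (f - \<Phi> y) < e/2" using close by blast
      then obtain x where x: "x \<in> F" "dist x (\<Phi> y) < e/2" using F(2) by blast
      have "dist x f \<le> dist x (\<Phi> y) + dist (\<Phi> y) f" by (rule dist_triangle)
      also have "dist (\<Phi> y) f = norm (f - \<Phi> y)" by (simp add: dist_norm norm_minus_commute)
      finally have "dist x f < e" using x y by linarith
      then show "f \<in> (\<Union>x\<in>F. {y. dist x y < e})" using x by blast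
    qed
    then show "\<exists>k. finite k \<and> K \<subseteq> (\<Union>x\<in>k. {y. dist x y < e})" using F(1) by blast
  qed
qed

end
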